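(* For each $0\le k\le K$ define $$v_k^-=\inf\Big(\operatorname*{argmax}_{v\in[0,q]}\Psi_k^{\mathrm{BSAA}}(v)\Big),\qquad v_k^+=\inf\Big(\operatorname*{argmax}_{v\in[q,1]}\Psi_k^{\mathrm{BSAA}}(v)\Big).$$ Then the sequences $(v_k^-)_{k=0}^K$ and $(v_k^+)_{k=0}^K$ are non-increasing in $k$.
   Context: Fix $c_u,c_o>0$ and $q=c_u/(c_u+c_o)\in(0,1)$. Fix $K\ge1$, $\bm n=(n_1,\dots,n_K)\in\mathbb N^K$, $n=\sum_k n_k$, $\sigma_k=\sum_{\ell=1}^k n_\ell$ ($\sigma_0=0$). $B_{r,m}(p)=\sum_{j=r}^m\binom mj p^j(1-p)^{m-j}$ (with $B_{r,m}\equiv1$ if $r<0$). For $v\in[0,1]$, $\Psi_k^{\mathrm{BSAA}}(v)=\big(1-B_{\lceil qn\rceil-\sigma_k,\,n-\sigma_k}(v)\big)(v-q)+(q-v)^+$. *)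

theory Defs
  imports Complex_Main
begin

definition binom_tail :: "int \<Rightarrow> nat \<Rightarrow> real \<Rightarrow> real" where
  "binom_tail r m p =
     (if r < 0 then 1
      else (\<Sum>j\<in>{nat r..m}. real (m choose j) * p ^ j * (1 - p) ^ (m - j)))"

definition sigma :: "(nat \<Rightarrow> nat) \<Rightarrow> nat \<Rightarrow> nat" where
  "sigma ns k = (\<Sum>l=1..k. ns l)"

definition Psi_BSAA :: "real \<Rightarrow> (nat \<Rightarrow> nat) \<Rightarrow> nat \<Rightarrow> nat \<Rightarrow> real \<Rightarrow> real" where
  "Psi_BSAA q ns K k v =
     (let N = sigma ns K in
      (1 - binom_tail (\<lceil>q * real N\<rceil> - int (sigma ns k)) (N - sigma ns k) v) * (v - q)
      + max (q - v) 0)"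

definition argmax_on :: "(real \<Rightarrow> real) \<Rightarrow> real set \<Rightarrow> real set" where
  "argmax_on f S = {v \<in> S. \<forall>w\<in>S. f w \<le> f v}"

end

theory Submission
  imports Defs
begin

definition PP :: "nat \<Rightarrow> nat \<Rightarrow> real \<Rightarrow> real" where
  "PP M j v = real (M choose j) * v ^ j * (1 - v) ^ (M - j)"

definition TT :: "nat \<Rightarrow> nat \<Rightarrow> real \<Rightarrow> real" where
  "TT s M v = (\<Sum>j\<in>{s..M}. PP M j v)"

lemma bt_nat: "binom_tail (int s) M v = TT s M v"
  by (simp add: binom_tail_def TT_def PP_def)

lemma binom_full: "(\<Sum>j\<in>{0..M}. PP M j v) = 1"
proof -
  have "(v + (1 - v)) ^ M = (\<Sum>k\<le>M. of_nat (M choose k) * v ^ k * (1 - v) ^ (M - k))"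
    by (rule binomial_ring)
  then show ?thesis by (simp add: PP_def atMost_atLeast0)
qed

lemma rec_aux: "\<forall>s. s + d = M \<longrightarrow> TT (Suc s) (Suc M) v = TT s M v - (1 - v) * PP M s v"
proof (induction d arbitrary: M)
  case 0
  then show ?case by (simp add: TT_def PP_def algebra_simps)
next
  case (Suc d)
  show ?case
  proof (intro allI impI)
    fix s assume h: "s + Suc d = M"
    obtain M' where M': "M = Suc M'" using h by (cases M) auto
    have IH: "TT (Suc (Suc s)) (Suc M) v = TT (Suc s) M v - (1 - v) * PP M (Suc s) v"
      using Suc.IH[of M] h by auto
    have e1: "TT (Suc s) (Suc M) v = PP (Suc M) (Suc s) v + TT (Suc (Suc s)) (Suc M) v"
      unfolding TT_def using h by (subst sum.atLeast_Suc_atMost) auto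
    have e2: "TT s M v = PP M s v + TT (Suc s) M v"
      unfolding TT_def using h by (subst sum.atLeast_Suc_atMost) auto
    have e3: "PP (Suc M) (Suc s) v = (1 - v) * PP M (Suc s) v + v * PP M s v"
    proof -
      have Mx: "M = s + Suc d" using h by simp
      show ?thesis unfolding PP_def Mx
        by (simp add: binomial_Suc_Suc algebra_simps Suc_diff_le)
    qed
    show "TT (Suc s) (Suc M) v = TT s M v - (1 - v) * PP M s v"
      using e1 e2 e3 IH by (simp add: algebra_simps)
  qed
qed

lemma rec: "s \<le> M \<Longrightarrow> TT (Suc s) (Suc M) v = TT s M v - (1 - v) * PP M s v"
  using rec_aux[of "M - s" M v] by auto


lemma core_ineq:
  fixes v w :: real assumes "0 \<le> v" "v \<le> w" "w \<le> 1"
  shows "v ^ e * (1 - w) ^ f \<le> w ^ e * (1 - v) ^ f"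
  using assms by (intro mult_mono power_mono) auto

lemma term_low:
  fixes v w :: real assumes "0 \<le> v" "v \<le> w" "w \<le> 1" "s \<le> j" "j \<le> M"
  shows "PP M j v * ((1 - w) * PP M s w) \<le> PP M j w * ((1 - v) * PP M s v)"
proof -
  obtain e where e: "j = s + e" using assms by (metis le_Suc_ex)
  obtain g where g: "M = j + g" using assms by (metis le_Suc_ex)
  have c: "v ^ e * (1 - w) ^ (Suc e) \<le> w ^ e * (1 - v) ^ (Suc e)"
    by (rule core_ineq[OF assms(1-3)])
  define C where "C = real (M choose j) * real (M choose s) * v ^ s * w ^ s * (1 - v) ^ g * (1 - w) ^ g"
  have C0: "C \<ge> 0" unfolding C_def using assms by auto
  have d1: "M - j = g" "M - s = e + g" using e g by auto
  have L: "PP M j v * ((1 - w) * PP M s w) = C * (v ^ e * (1 - w) ^ (Suc e))"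
    unfolding PP_def C_def d1 unfolding e by (simp only: power_add power_Suc) (simp only: mult_ac)
  have R: "PP M j w * ((1 - v) * PP M s v) = C * (w ^ e * (1 - v) ^ (Suc e))"
    unfolding PP_def C_def d1 unfolding e by (simp only: power_add power_Suc) (simp only: mult_ac)
  show ?thesis unfolding L R using C0 c by (rule mult_left_mono[rotated])
qed

lemma term_up:
  fixes v w :: real assumes "0 \<le> v" "v \<le> w" "w \<le> 1" "j < s" "s \<le> M"
  shows "PP M j w * ((1 - v) * PP M s v) \<le> PP M j v * ((1 - w) * PP M s w)"
proof -
  obtain e where e: "s = j + Suc e" using less_imp_Suc_add[OF assms(4)] by auto
  obtain g where g: "M = s + g" using assms by (metis le_Suc_ex)
  have c: "(1 - w) ^ e * v ^ (Suc e) \<le> (1 - v) ^ e * w ^ (Suc e)"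
    using assms by (intro mult_mono power_mono) auto
  define C where "C = real (M choose j) * real (M choose s) * v ^ j * w ^ j * (1 - v) ^ Suc g * (1 - w) ^ Suc g"
  have C0: "C \<ge> 0" unfolding C_def using assms by auto
  have d1: "M - j = Suc e + g" "M - s = g" using e g by auto
  have L: "PP M j w * ((1 - v) * PP M s v) = C * ((1 - w) ^ e * v ^ (Suc e))"
    unfolding PP_def C_def d1 unfolding e by (simp only: power_add power_Suc) (simp only: mult_ac)
  have R: "PP M j v * ((1 - w) * PP M s w) = C * ((1 - v) ^ e * w ^ (Suc e))"
    unfolding PP_def C_def d1 unfolding e by (simp only: power_add power_Suc) (simp only: mult_ac)
  show ?thesis unfolding L R using C0 c by (rule mult_left_mono[rotated])
qed


lemma PP_nonneg: "0 \<le> v \<Longrightarrow> v \<le> 1 \<Longrightarrow> PP M j v \<ge> 0"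
  unfolding PP_def by auto

lemma bt_le0: "r \<le> 0 \<Longrightarrow> binom_tail r m v = 1"
proof (cases "r < 0")
  case True then show ?thesis by (simp add: binom_tail_def)
next
  case False
  assume "r \<le> 0"
  then have "r = int 0" using False by simp
  then show ?thesis using bt_nat[of 0 m v] binom_full[of m v] by (simp add: TT_def)
qed

lemma low_sum: "s \<le> Suc M \<Longrightarrow> 1 - TT s M v = (\<Sum>j\<in>{0..<s}. PP M j v)"
proof -
  assume a: "s \<le> Suc M"
  have "(\<Sum>j\<in>{0..<s}. PP M j v) + (\<Sum>j\<in>{s..<Suc M}. PP M j v) = (\<Sum>j\<in>{0..<Suc M}. PP M j v)"
    using a by (intro sum.atLeastLessThan_concat) auto
  moreover have "(\<Sum>j\<in>{0..<Suc M}. PP M j v) = 1" using binom_full[of M v]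
    by (simp add: atLeastLessThanSuc_atLeastAtMost)
  ultimately show ?thesis unfolding TT_def by (simp add: atLeastLessThanSuc_atLeastAtMost)
qed

lemma bt_split:
  assumes "r \<ge> 1" "r \<le> int m"
  shows "nat (r - 1) \<le> m - 1" "m = Suc (m - 1)"
    "binom_tail (r - 1) (m - 1) v = TT (nat (r - 1)) (m - 1) v"
    "binom_tail r m v = TT (nat (r - 1)) (m - 1) v - (1 - v) * PP (m - 1) (nat (r - 1)) v"
proof -
  have "r = int (Suc (nat (r - 1)))" using assms by simp
  then obtain s where r: "r = int (Suc s)" by blast
  obtain M where m: "m = Suc M" using assms r by (cases m) auto
  have sM: "s \<le> M" using assms r m by simp
  have e: "nat (r - 1) = s" "m - 1 = M" using r m by auto
  show "nat (r - 1) \<le> m - 1" "m = Suc (m - 1)" unfolding e using sM m by auto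
  show "binom_tail (r - 1) (m - 1) v = TT (nat (r - 1)) (m - 1) v"
    unfolding e using bt_nat[of s M v] r by simp
  show "binom_tail r m v = TT (nat (r - 1)) (m - 1) v - (1 - v) * PP (m - 1) (nat (r - 1)) v"
    unfolding e using bt_nat[of "Suc s" "Suc M" v] r m rec[OF sM] by simp
qed

lemma crossB:
  fixes v w :: real assumes "0 \<le> v" "v \<le> w" "w \<le> 1" "r \<le> int m"
  shows "binom_tail (r - 1) (m - 1) w * binom_tail r m v \<le> binom_tail (r - 1) (m - 1) v * binom_tail r m w"
proof (cases "r \<ge> 1")
  case False
  then show ?thesis using bt_le0[of r] bt_le0[of "r - 1"] by simp
next
  case True
  define s where "s = nat (r - 1)"
  define M where "M = m - 1"
  note sp = bt_split[OF True assms(4), folded s_def M_def]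
  have key: "TT s M v * ((1 - w) * PP M s w) \<le> TT s M w * ((1 - v) * PP M s v)"
    unfolding TT_def sum_distrib_right
    by (rule sum_mono) (use term_low assms in auto)
  show ?thesis unfolding M_def[symmetric] sp(3) sp(4)
    using key by (simp add: algebra_simps)
qed

lemma crossL:
  fixes v w :: real assumes "0 \<le> v" "v \<le> w" "w \<le> 1" "r \<le> int m"
  shows "(1 - binom_tail (r - 1) (m - 1) w) * (1 - binom_tail r m v)
     \<le> (1 - binom_tail (r - 1) (m - 1) v) * (1 - binom_tail r m w)"
proof (cases "r \<ge> 1")
  case False
  then show ?thesis using bt_le0[of r] bt_le0[of "r - 1"] by simp
next
  case True
  define s where "s = nat (r - 1)"
  define M where "M = m - 1"
  note sp = bt_split[OF True assms(4), folded s_def M_def]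
  have ls: "\<And>x. 1 - TT s M x = (\<Sum>j\<in>{0..<s}. PP M j x)" using sp(1) low_sum by simp
  have key: "(1 - TT s M w) * ((1 - v) * PP M s v) \<le> (1 - TT s M v) * ((1 - w) * PP M s w)"
    unfolding ls sum_distrib_right
    by (rule sum_mono) (use term_up assms sp(1) in auto)
  show ?thesis unfolding M_def[symmetric] sp(3) sp(4)
    using key by (simp add: algebra_simps)
qed


definition Rel :: "(real \<Rightarrow> real) \<Rightarrow> (real \<Rightarrow> real) \<Rightarrow> real set \<Rightarrow> bool" where
  "Rel f g S = (\<forall>v\<in>argmax_on f S. \<exists>w\<in>argmax_on g S. w \<le> v)"

lemma Rel_refl: "Rel f f S"
  unfolding Rel_def by auto

lemma Rel_trans: "Rel f g S \<Longrightarrow> Rel g h S \<Longrightarrow> Rel f h S"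
  unfolding Rel_def by (meson order_trans)

lemma step_abs:
  assumes ne: "argmax_on g S \<noteq> {}"
    and cr: "\<And>v w. v \<in> S \<Longrightarrow> w \<in> S \<Longrightarrow> v \<le> w \<Longrightarrow> g w * f v \<le> g v * f w"
    and gn: "\<And>v. v \<in> S \<Longrightarrow> g v \<ge> 0"
    and ps: "\<And>v. v \<in> argmax_on f S \<Longrightarrow> f v > 0 \<or> v \<in> argmax_on g S"
  shows "Rel f g S"
  unfolding Rel_def
proof
  fix v assume v: "v \<in> argmax_on f S"
  obtain w0 where w0: "w0 \<in> argmax_on g S" using ne by blast
  show "\<exists>w\<in>argmax_on g S. w \<le> v"
  proof (cases "w0 \<le> v")
    case True then show ?thesis using w0 by blast
  next
    case False
    have vS: "v \<in> S" and vmax: "\<forall>u\<in>S. f u \<le> f v" using v unfolding argmax_on_def by auto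
    have w0S: "w0 \<in> S" and w0max: "\<forall>u\<in>S. g u \<le> g w0" using w0 unfolding argmax_on_def by auto
    show ?thesis
    proof (cases "f v > 0")
      case True
      have "g w0 * f v \<le> g v * f w0" using cr[OF vS w0S] False by auto
      also have "\<dots> \<le> g v * f v" using vmax w0S gn[OF vS] by (simp add: mult_left_mono)
      finally have "g w0 \<le> g v" using True by simp
      then have "v \<in> argmax_on g S" using w0max vS unfolding argmax_on_def by auto
      then show ?thesis by blast
    next
      case False
      then have "v \<in> argmax_on g S" using ps[OF v] by auto
      then show ?thesis by blast
    qed
  qed
qed

lemma Rel_Inf:
  assumes "Rel f g S" "argmax_on f S \<noteq> {}" "bdd_below S"
  shows "Inf (argmax_on g S) \<le> Inf (argmax_on f S)"
proof (rule cInf_greatest[OF assms(2)])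
  fix v assume "v \<in> argmax_on f S"
  then obtain w where w: "w \<in> argmax_on g S" "w \<le> v" using assms(1) unfolding Rel_def by blast
  have sub: "argmax_on g S \<subseteq> S" unfolding argmax_on_def by auto
  have "bdd_below (argmax_on g S)" by (rule bdd_below_mono[OF assms(3) sub])
  then have "Inf (argmax_on g S) \<le> w" by (rule cInf_lower[OF w(1)])
  then show "Inf (argmax_on g S) \<le> v" using w(2) by (rule order_trans)
qed

lemma argmax_cong: "(\<And>v. v \<in> S \<Longrightarrow> f v = g v) \<Longrightarrow> argmax_on f S = argmax_on g S"
  unfolding argmax_on_def by auto

lemma bt_cont: "continuous_on S (\<lambda>v. binom_tail r m v)"
  unfolding binom_tail_def by (cases "r < 0") (auto intro!: continuous_intros)

lemma argmax_ne:
  fixes a b :: real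
  assumes "a \<le> b" "continuous_on {a..b} f"
  shows "argmax_on f {a..b} \<noteq> {}"
proof -
  obtain x where "x \<in> {a..b}" "\<forall>y\<in>{a..b}. f y \<le> f x"
    using continuous_attains_sup[OF compact_Icc _ assms(2)] assms(1) by auto
  then show ?thesis unfolding argmax_on_def by auto
qed

definition GL :: "real \<Rightarrow> int \<Rightarrow> nat \<Rightarrow> real \<Rightarrow> real" where
  "GL q r m v = binom_tail r m v * (q - v)"

definition GU :: "real \<Rightarrow> int \<Rightarrow> nat \<Rightarrow> real \<Rightarrow> real" where
  "GU q r m v = (1 - binom_tail r m v) * (v - q)"

lemma TT_nonneg: "0 \<le> v \<Longrightarrow> v \<le> 1 \<Longrightarrow> TT s M v \<ge> 0"
  unfolding TT_def by (intro sum_nonneg) (auto intro: PP_nonneg)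

lemma bt_pos: assumes "0 < x" "x \<le> 1" "r \<le> int m" shows "binom_tail r m x > 0"
proof (cases "r < 0")
  case True then show ?thesis by (simp add: binom_tail_def)
next
  case False
  then have r: "r = int (nat r)" by simp
  have "PP m m x \<le> TT (nat r) m x" unfolding TT_def
    using assms False by (intro member_le_sum) (auto intro: PP_nonneg)
  moreover have "PP m m x > 0" unfolding PP_def using assms by simp
  ultimately show ?thesis using bt_nat[of "nat r" m x] r by simp
qed

lemma stepL:
  assumes q: "0 < q" "q < 1" and rm: "r \<le> int m"
  shows "Rel (GL q r m) (GL q (r - 1) (m - 1)) {0..q}"
proof (cases "r \<ge> 1")
  case False
  then have "GL q (r - 1) (m - 1) = GL q r m" unfolding GL_def using bt_le0[of r] bt_le0[of "r - 1"]
    by (auto simp: fun_eq_iff)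
  then show ?thesis by (simp add: Rel_refl)
next
  case True
  define s where "s = nat (r - 1)"
  define M where "M = m - 1"
  note sp = bt_split[OF True rm, folded s_def M_def]
  show ?thesis
  proof (rule step_abs)
    show "argmax_on (GL q (r - 1) (m - 1)) {0..q} \<noteq> {}"
      using q unfolding GL_def by (intro argmax_ne) (auto intro!: continuous_intros bt_cont)
  next
    fix v w assume v: "v \<in> {0..q}" and w: "w \<in> {0..q}" and vw: "v \<le> w"
    have c: "binom_tail (r - 1) (m - 1) w * binom_tail r m v \<le> binom_tail (r - 1) (m - 1) v * binom_tail r m w"
      using crossB[OF _ vw _ rm] v w q by auto
    have p: "(q - w) * (q - v) \<ge> 0" using v w by auto
    have "binom_tail (r - 1) (m - 1) w * binom_tail r m v * ((q - w) * (q - v))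
      \<le> binom_tail (r - 1) (m - 1) v * binom_tail r m w * ((q - w) * (q - v))"
      using mult_right_mono[OF c p] .
    then show "GL q (r - 1) (m - 1) w * GL q r m v \<le> GL q (r - 1) (m - 1) v * GL q r m w"
      unfolding GL_def by (simp add: algebra_simps)
  next
    fix v assume v: "v \<in> {0..q}"
    have "binom_tail (r - 1) (m - 1) v \<ge> 0"
      unfolding M_def[symmetric] sp(3) using v q by (intro TT_nonneg) auto
    then show "GL q (r - 1) (m - 1) v \<ge> 0" unfolding GL_def using v by auto
  next
    fix v assume v: "v \<in> argmax_on (GL q r m) {0..q}"
    have "q / 2 \<in> {0..q}" using q by auto
    then have "GL q r m (q / 2) \<le> GL q r m v" using v unfolding argmax_on_def by auto
    moreover have "GL q r m (q / 2) > 0" unfolding GL_def using q bt_pos[OF _ _ rm, of "q/2"] by auto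
    ultimately show "GL q r m v > 0 \<or> v \<in> argmax_on (GL q (r - 1) (m - 1)) {0..q}" by auto
  qed
qed

lemma stepU:
  assumes q: "0 < q" "q < 1" and rm: "r \<le> int m"
  shows "Rel (GU q r m) (GU q (r - 1) (m - 1)) {q..1}"
proof (cases "r \<ge> 1")
  case False
  then have "GU q (r - 1) (m - 1) = GU q r m" unfolding GU_def using bt_le0[of r] bt_le0[of "r - 1"]
    by (auto simp: fun_eq_iff)
  then show ?thesis by (simp add: Rel_refl)
next
  case True
  define s where "s = nat (r - 1)"
  define M where "M = m - 1"
  note sp = bt_split[OF True rm, folded s_def M_def]
  have ls: "\<And>x. 1 - TT s M x = (\<Sum>j\<in>{0..<s}. PP M j x)" using sp(1) low_sum by simp
  show ?thesis
  proof (rule step_abs)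
    show "argmax_on (GU q (r - 1) (m - 1)) {q..1} \<noteq> {}"
      using q unfolding GU_def by (intro argmax_ne) (auto intro!: continuous_intros bt_cont)
  next
    fix v w assume v: "v \<in> {q..1}" and w: "w \<in> {q..1}" and vw: "v \<le> w"
    have c: "(1 - binom_tail (r - 1) (m - 1) w) * (1 - binom_tail r m v)
     \<le> (1 - binom_tail (r - 1) (m - 1) v) * (1 - binom_tail r m w)"
      using crossL[OF _ vw _ rm] v w q by auto
    have p: "(w - q) * (v - q) \<ge> 0" using v w by auto
    have "(1 - binom_tail (r - 1) (m - 1) w) * (1 - binom_tail r m v) * ((w - q) * (v - q))
      \<le> (1 - binom_tail (r - 1) (m - 1) v) * (1 - binom_tail r m w) * ((w - q) * (v - q))"
      using mult_right_mono[OF c p] .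
    then show "GU q (r - 1) (m - 1) w * GU q r m v \<le> GU q (r - 1) (m - 1) v * GU q r m w"
      unfolding GU_def by (simp add: algebra_simps)
  next
    fix v assume v: "v \<in> {q..1}"
    have "1 - binom_tail (r - 1) (m - 1) v \<ge> 0"
      unfolding M_def[symmetric] sp(3) ls using v q by (intro sum_nonneg) (auto intro: PP_nonneg)
    then show "GU q (r - 1) (m - 1) v \<ge> 0" unfolding GU_def using v by auto
  next
    fix v assume v: "v \<in> argmax_on (GU q r m) {q..1}"
    define u where "u = (q + 1) / 2"
    have u: "u \<in> {q..1}" "0 < u" "u < 1" using q unfolding u_def by auto
    then have "GU q r m u \<le> GU q r m v" using v unfolding argmax_on_def by auto
    moreover have "GU q r m u > 0"
    proof -
      have "1 - binom_tail r m u = (1 - TT s M u) + (1 - u) * PP M s u"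
        using sp(4)[of u] by simp
      moreover have "1 - TT s M u \<ge> 0" unfolding ls using u by (intro sum_nonneg) (auto intro: PP_nonneg)
      moreover have "PP M s u > 0" unfolding PP_def using u sp(1) by simp
      ultimately have "1 - binom_tail r m u > 0" using u by (smt (verit) mult_pos_pos)
      then show ?thesis unfolding GU_def using u q unfolding u_def by simp
    qed
    ultimately show "GU q r m v > 0 \<or> v \<in> argmax_on (GU q (r - 1) (m - 1)) {q..1}" by auto
  qed
qed


lemma iterL:
  assumes "0 < q" "q < 1"
  shows "\<forall>r m. r \<le> int m \<longrightarrow> a \<le> m \<longrightarrow> Rel (GL q r m) (GL q (r - int a) (m - a)) {0..q}"
proof (induction a)
  case 0 then show ?case by (simp add: Rel_refl)
next
  case (Suc a)
  show ?case
  proof (intro allI impI)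
    fix r m assume rm: "r \<le> int m" and am: "Suc a \<le> m"
    have h1: "Rel (GL q r m) (GL q (r - int a) (m - a)) {0..q}" using Suc.IH rm am by auto
    have h2: "Rel (GL q (r - int a) (m - a)) (GL q (r - int a - 1) (m - a - 1)) {0..q}"
      using stepL[OF assms, of "r - int a" "m - a"] rm am by auto
    have e: "r - int a - 1 = r - int (Suc a)" "m - a - 1 = m - Suc a" by auto
    show "Rel (GL q r m) (GL q (r - int (Suc a)) (m - Suc a)) {0..q}"
      using Rel_trans[OF h1 h2] unfolding e .
  qed
qed

lemma iterU:
  assumes "0 < q" "q < 1"
  shows "\<forall>r m. r \<le> int m \<longrightarrow> a \<le> m \<longrightarrow> Rel (GU q r m) (GU q (r - int a) (m - a)) {q..1}"
proof (induction a)
  case 0 then show ?case by (simp add: Rel_refl)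
next
  case (Suc a)
  show ?case
  proof (intro allI impI)
    fix r m assume rm: "r \<le> int m" and am: "Suc a \<le> m"
    have h1: "Rel (GU q r m) (GU q (r - int a) (m - a)) {q..1}" using Suc.IH rm am by auto
    have h2: "Rel (GU q (r - int a) (m - a)) (GU q (r - int a - 1) (m - a - 1)) {q..1}"
      using stepU[OF assms, of "r - int a" "m - a"] rm am by auto
    have e: "r - int a - 1 = r - int (Suc a)" "m - a - 1 = m - Suc a" by auto
    show "Rel (GU q r m) (GU q (r - int (Suc a)) (m - Suc a)) {q..1}"
      using Rel_trans[OF h1 h2] unfolding e .
  qed
qed

lemma sigma_mono: "i \<le> j \<Longrightarrow> sigma ns i \<le> sigma ns j"
  unfolding sigma_def by (intro sum_mono2) auto

theorem lemma4:
  fixes c_u c_o q :: real and K :: nat and ns :: "nat \<Rightarrow> nat"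
  assumes "c_u > 0" and "c_o > 0" and "q = c_u / (c_u + c_o)"
    and "K \<ge> 1" and "\<forall>k\<in>{1..K}. ns k \<ge> 1"
  shows "\<forall>i j. i \<le> j \<and> j \<le> K \<longrightarrow>
           Inf (argmax_on (Psi_BSAA q ns K j) {0..q}) \<le> Inf (argmax_on (Psi_BSAA q ns K i) {0..q})
         \<and> Inf (argmax_on (Psi_BSAA q ns K j) {q..1}) \<le> Inf (argmax_on (Psi_BSAA q ns K i) {q..1})"
proof (intro allI impI)
  fix i j assume ij: "i \<le> j \<and> j \<le> K"
  have q0: "0 < q" using assms by simp
  have q1: "q < 1" unfolding assms(3) using assms(1,2) by (simp add: divide_less_eq)
  define N where "N = sigma ns K"
  define R where "R k = \<lceil>q * real N\<rceil> - int (sigma ns k)" for k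
  define MM where "MM k = N - sigma ns k" for k
  have Psi: "Psi_BSAA q ns K k v = (1 - binom_tail (R k) (MM k) v) * (v - q) + max (q - v) 0" for k v
    unfolding Psi_BSAA_def R_def MM_def N_def Let_def by simp
  have sij: "sigma ns i \<le> sigma ns j" "sigma ns j \<le> N"
    using sigma_mono ij unfolding N_def by auto
  define a where "a = sigma ns j - sigma ns i"
  have Rj: "R j = R i - int a" unfolding R_def a_def using sij by auto
  have Mj: "MM j = MM i - a" unfolding MM_def a_def using sij by auto
  have am: "a \<le> MM i" unfolding MM_def a_def using sij by auto
  have "q * real N \<le> real N" using q0 q1 by (intro mult_left_le_one_le) auto
  then have "\<lceil>q * real N\<rceil> \<le> int N" by (simp add: ceiling_le_iff)
  then have rm: "R i \<le> int (MM i)" unfolding R_def MM_def using sij by auto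
  have AL: "argmax_on (Psi_BSAA q ns K k) {0..q} = argmax_on (GL q (R k) (MM k)) {0..q}" for k
    by (rule argmax_cong) (auto simp: Psi GL_def algebra_simps)
  have AU: "argmax_on (Psi_BSAA q ns K k) {q..1} = argmax_on (GU q (R k) (MM k)) {q..1}" for k
    by (rule argmax_cong) (auto simp: Psi GU_def)
  have relL: "Rel (GL q (R i) (MM i)) (GL q (R j) (MM j)) {0..q}"
    using iterL[OF q0 q1, of a] rm am unfolding Rj Mj by auto
  have relU: "Rel (GU q (R i) (MM i)) (GU q (R j) (MM j)) {q..1}"
    using iterU[OF q0 q1, of a] rm am unfolding Rj Mj by auto
  have neL: "argmax_on (GL q (R i) (MM i)) {0..q} \<noteq> {}"
    using q0 unfolding GL_def by (intro argmax_ne) (auto intro!: continuous_intros bt_cont)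
  have neU: "argmax_on (GU q (R i) (MM i)) {q..1} \<noteq> {}"
    using q1 unfolding GU_def by (intro argmax_ne) (auto intro!: continuous_intros bt_cont)
  show "Inf (argmax_on (Psi_BSAA q ns K j) {0..q}) \<le> Inf (argmax_on (Psi_BSAA q ns K i) {0..q})
         \<and> Inf (argmax_on (Psi_BSAA q ns K j) {q..1}) \<le> Inf (argmax_on (Psi_BSAA q ns K i) {q..1})"
    unfolding AL AU using Rel_Inf[OF relL neL] Rel_Inf[OF relU neU] by auto
qed

end
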